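(* Let $w_k^A,w_k^B$ be the noise vectors associated with SDQ (see context), under the assumptions that rewards satisfy $|r(s,a,s')|\le1$, $\|Q_0^A\|_\infty,\|Q_0^B\|_\infty\le1$, $d(s,a)>0$ for all $(s,a)$, and constant $\alpha\in(0,1)$. Let $Q_k^{\mathrm{err}_{UL}}$ be defined by \[ Q_{k+1}^{\mathrm{err}_{UL}}=(I+\alpha\gamma DP\Pi_{Q^*}-\alpha D)Q_k^{\mathrm{err}_{UL}}+\alpha w_k^A-\alpha w_k^B \] from a deterministic initial vector $Q_0^{\mathrm{err}_{UL}}\in\mathbb{R}^{|\mathcal{S}||\mathcal{A}|}$. With $d_{\min}=\min_{(s,a)}d(s,a)$ and $\rho=1-\alpha d_{\min}(1-\gamma)$, for every $k\ge0$, \[ \mathbb{E}\big[\|Q_k^{\mathrm{err}_{UL}}\|_2\big]\le\frac{4\alpha^{1/2}|\mathcal{S}\times\mathcal{A}|}{d_{\min}^{1/2}(1-\gamma)^{3/2}}+|\mathcal{S}\times\mathcal{A}|\,\|Q_0^{\mathrm{err}_{UL}}\|_2\,\rho^k. \]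
   Context: Finite MDP with states $\mathcal{S}=\{1,\dots,|\mathcal{S}|\}$, actions $\mathcal{A}=\{1,\dots,|\mathcal{A}|\}$, transitions $P(s'|s,a)$, deterministic reward $r(s,a,s')$ with $|r|\le1$, discount $\gamma\in(0,1)$, optimal action-value function $Q^*$; the MDP is assumed ergodic. Sampling distribution $d(s,a)>0$; at iteration $k$, $(s_k,a_k)\sim d$ i.i.d., $s_k'\sim P(\cdot|s_k,a_k)$, $r_{k+1}=r(s_k,a_k,s_k')$. SDQ: only entry $(s_k,a_k)$ is updated, $Q_{k+1}^A(s_k,a_k)=Q_k^A(s_k,a_k)+\alpha\{r_{k+1}+\gamma Q_k^A(s_k',\arg\max_aQ_k^B(s_k',a))-Q_k^A(s_k,a_k)\}$ and symmetrically for $B$ with roles of $A,B$ swapped. Vector notation: $Q\in\mathbb{R}^{|\mathcal{S}||\mathcal{A}|}$ stacks $Q(\cdot,1),\dots,Q(\cdot,|\mathcal{A}|)$, so $Q(s,a)=(e_a\otimes e_s)^TQ$. $D$ is the diagonal matrix with entry $d(s,a)$ at position $(s,a)$. $P\in\mathbb{R}^{|\mathcal{S}||\mathcal{A}|\times|\mathcal{S}|}$ has row $(s,a)$ equal to $P(\cdot|s,a)$. $R(s,a)=\mathbb{E}[r(s,a,s')|s,a]$. For $Q$, $\pi_Q(s)=\arg\max_aQ(s,a)$ (fixed tie-breaking) and $\Pi_Q\in\mathbb{R}^{|\mathcal{S}|\times|\mathcal{S}||\mathcal{A}|}$ has $s$-th row $e_{\pi_Q(s)}^T\otimes e_s^T$.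 Noise: $w_k^A=(e_{a_k}\otimes e_{s_k})r_{k+1}+\gamma(e_{a_k}\otimes e_{s_k})e_{s_k'}^T\Pi_{Q_k^B}Q_k^A-(e_{a_k}\otimes e_{s_k})(e_{a_k}\otimes e_{s_k})^TQ_k^A-(DR+\gamma DP\Pi_{Q_k^B}Q_k^A-DQ_k^A)$, and $w_k^B$ is the same with $A$ and $B$ swapped. $|\mathcal{S}\times\mathcal{A}|=|\mathcal{S}||\mathcal{A}|$. *)

theory Defs
  imports "HOL-Probability.Probability"
begin

text \<open>Action-value functions are functions on state-action pairs (the paper's vectors
  in R^{|S||A|}).\<close>

type_synonym ('s, 'act) qfun = "'s \<times> 'act \<Rightarrow> real"

definition greedy :: "('s, 'act::{finite,linorder}) qfun \<Rightarrow> 's \<Rightarrow> 'act" where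
  "greedy Q s = (LEAST a. \<forall>b. Q (s, b) \<le> Q (s, a))"

definition expR :: "('s::finite \<Rightarrow> 'act \<Rightarrow> 's pmf) \<Rightarrow> ('s \<Rightarrow> 'act \<Rightarrow> 's \<Rightarrow> real) \<Rightarrow> 's \<Rightarrow> 'act \<Rightarrow> real" where
  "expR P r s a = (\<Sum>s'\<in>UNIV. pmf (P s a) s' * r s a s')"

definition bellman_opt ::
  "('s::finite \<Rightarrow> 'act::finite \<Rightarrow> 's pmf) \<Rightarrow> ('s \<Rightarrow> 'act \<Rightarrow> 's \<Rightarrow> real) \<Rightarrow> real
    \<Rightarrow> ('s, 'act) qfun \<Rightarrow> ('s, 'act) qfun" where
  "bellman_opt P r \<gamma> Q = (\<lambda>(s, a). expR P r s a
      + \<gamma> * (\<Sum>s'\<in>UNIV. pmf (P s a) s' * Max (range (\<lambda>b. Q (s', b)))))"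

definition Qstar ::
  "('s::finite \<Rightarrow> 'act::finite \<Rightarrow> 's pmf) \<Rightarrow> ('s \<Rightarrow> 'act \<Rightarrow> 's \<Rightarrow> real) \<Rightarrow> real \<Rightarrow> ('s, 'act) qfun" where
  "Qstar P r \<gamma> = (THE Q. bellman_opt P r \<gamma> Q = Q)"

fun trans_pow :: "('s::finite \<Rightarrow> 'act \<Rightarrow> 's pmf) \<Rightarrow> ('s \<Rightarrow> 'act) \<Rightarrow> nat \<Rightarrow> 's \<Rightarrow> 's \<Rightarrow> real" where
  "trans_pow P \<pi> 0 s s' = (if s = s' then 1 else 0)"
| "trans_pow P \<pi> (Suc n) s s' = (\<Sum>t\<in>UNIV. pmf (P s (\<pi> s)) t * trans_pow P \<pi> n t s')"

definition ergodic :: "('s::finite \<Rightarrow> 'act \<Rightarrow> 's pmf) \<Rightarrow> bool" where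
  "ergodic P = (\<forall>\<pi> s s'. \<exists>n. trans_pow P \<pi> n s s' > 0)"

definition sample_pmf :: "('s \<times> 'act) pmf \<Rightarrow> ('s \<Rightarrow> 'act \<Rightarrow> 's pmf) \<Rightarrow> ('s \<times> 'act \<times> 's) pmf" where
  "sample_pmf d P = bind_pmf d (\<lambda>(s, a). map_pmf (\<lambda>s'. (s, a, s')) (P s a))"

definition sdq_step ::
  "real \<Rightarrow> real \<Rightarrow> ('s \<Rightarrow> 'act \<Rightarrow> 's \<Rightarrow> real) \<Rightarrow> ('s, 'act::{finite,linorder}) qfun \<times> ('s, 'act) qfun
    \<Rightarrow> 's \<times> 'act \<times> 's \<Rightarrow> ('s, 'act) qfun \<times> ('s, 'act) qfun" where
  "sdq_step \<alpha> \<gamma> r QQ smp = (case QQ of (QA, QB) \<Rightarrow> case smp of (s, a, s') \<Rightarrow>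
     (QA((s, a) := QA (s, a) + \<alpha> * (r s a s' + \<gamma> * QA (s', greedy QB s') - QA (s, a))),
      QB((s, a) := QB (s, a) + \<alpha> * (r s a s' + \<gamma> * QB (s', greedy QA s') - QB (s, a)))))"

fun sdq ::
  "real \<Rightarrow> real \<Rightarrow> ('s \<Rightarrow> 'act \<Rightarrow> 's \<Rightarrow> real) \<Rightarrow> ('s, 'act::{finite,linorder}) qfun \<Rightarrow> ('s, 'act) qfun
    \<Rightarrow> nat \<Rightarrow> ('s \<times> 'act \<times> 's) stream \<Rightarrow> ('s, 'act) qfun \<times> ('s, 'act) qfun" where
  "sdq \<alpha> \<gamma> r QA0 QB0 0 \<omega> = (QA0, QB0)"
| "sdq \<alpha> \<gamma> r QA0 QB0 (Suc k) \<omega> = sdq_step \<alpha> \<gamma> r (sdq \<alpha> \<gamma> r QA0 QB0 k \<omega>) (\<omega> !! k)"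

text \<open>Noise vector w^A for current iterates QA, QB and sample (s,a,s');
  w^B is obtained by swapping QA and QB.\<close>
definition noise ::
  "('s::finite \<Rightarrow> 'act::{finite,linorder} \<Rightarrow> 's pmf) \<Rightarrow> ('s \<Rightarrow> 'act \<Rightarrow> 's \<Rightarrow> real) \<Rightarrow> real
    \<Rightarrow> ('s \<times> 'act) pmf \<Rightarrow> ('s, 'act) qfun \<Rightarrow> ('s, 'act) qfun \<Rightarrow> 's \<times> 'act \<times> 's \<Rightarrow> ('s, 'act) qfun" where
  "noise P r \<gamma> d QA QB smp = (case smp of (s, a, s') \<Rightarrow> (\<lambda>(x, y).
      (if (x, y) = (s, a) then r s a s' + \<gamma> * QA (s', greedy QB s') - QA (s, a) else 0)
      - pmf d (x, y) * (expR P r x y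
          + \<gamma> * (\<Sum>t\<in>UNIV. pmf (P x y) t * QA (t, greedy QB t)) - QA (x, y))))"

fun err_UL ::
  "('s::finite \<Rightarrow> 'act::{finite,linorder} \<Rightarrow> 's pmf) \<Rightarrow> ('s \<Rightarrow> 'act \<Rightarrow> 's \<Rightarrow> real) \<Rightarrow> real
    \<Rightarrow> ('s \<times> 'act) pmf \<Rightarrow> real \<Rightarrow> ('s, 'act) qfun \<Rightarrow> ('s, 'act) qfun \<Rightarrow> ('s, 'act) qfun
    \<Rightarrow> nat \<Rightarrow> ('s \<times> 'act \<times> 's) stream \<Rightarrow> ('s, 'act) qfun" where
  "err_UL P r \<gamma> d \<alpha> QA0 QB0 E0 0 \<omega> = E0"
| "err_UL P r \<gamma> d \<alpha> QA0 QB0 E0 (Suc k) \<omega> =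
     (let E = err_UL P r \<gamma> d \<alpha> QA0 QB0 E0 k \<omega>;
          QA = fst (sdq \<alpha> \<gamma> r QA0 QB0 k \<omega>);
          QB = snd (sdq \<alpha> \<gamma> r QA0 QB0 k \<omega>);
          wA = noise P r \<gamma> d QA QB (\<omega> !! k);
          wB = noise P r \<gamma> d QB QA (\<omega> !! k);
          \<pi> = greedy (Qstar P r \<gamma>)
      in (\<lambda>(x, y). E (x, y)
            + \<alpha> * \<gamma> * pmf d (x, y) * (\<Sum>t\<in>UNIV. pmf (P x y) t * E (t, \<pi> t))
            - \<alpha> * pmf d (x, y) * E (x, y)
            + \<alpha> * wA (x, y) - \<alpha> * wB (x, y)))"

definition l2norm :: "('a::finite \<Rightarrow> real) \<Rightarrow> real" where
  "l2norm v = sqrt (\<Sum>x\<in>UNIV. (v x)\<^sup>2)"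

end

theory Submission
  imports Defs
begin


fun ES :: "('a::finite \<Rightarrow> real) \<Rightarrow> nat \<Rightarrow> ('a list \<Rightarrow> real) \<Rightarrow> real" where
  "ES w 0 F = F []"
| "ES w (Suc k) F = ES w k (\<lambda>xs. \<Sum>z\<in>UNIV. w z * F (xs @ [z]))"

lemma ES_cong: "(\<And>xs. length xs = k \<Longrightarrow> F xs = G xs) \<Longrightarrow> ES w k F = ES w k G"
proof (induction k arbitrary: F G)
  case 0 then show ?case by simp
next
  case (Suc k)
  show ?case unfolding ES.simps
    by (rule Suc.IH) (simp add: Suc.prems)
qed

lemma ES_add: "ES w k (\<lambda>xs. F xs + G xs) = ES w k F + ES w k G"
  by (induction k arbitrary: F G) (auto simp: algebra_simps sum.distrib)

lemma ES_cmult: "ES w k (\<lambda>xs. c * F xs) = c * ES w k F"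
proof (induction k arbitrary: F)
  case 0 then show ?case by simp
next
  case (Suc k)
  have "ES w (Suc k) (\<lambda>xs. c * F xs) = ES w k (\<lambda>xs. c * (\<Sum>z\<in>UNIV. w z * F(xs@[z])))"
    unfolding ES.simps by (rule arg_cong[where f="ES w k"]) (simp add: sum_distrib_left mult.left_commute)
  also have "\<dots> = c * ES w k (\<lambda>xs. \<Sum>z\<in>UNIV. w z * F(xs@[z]))" by (rule Suc.IH)
  finally show ?case by simp
qed

lemma ES_zero: "ES w k (\<lambda>_. 0) = 0"
  by (induction k) auto

lemma ES_sum: "finite A \<Longrightarrow> ES w k (\<lambda>xs. \<Sum>i\<in>A. F i xs) = (\<Sum>i\<in>A. ES w k (F i))"
  by (induction A rule: finite_induct) (auto simp: ES_add ES_zero)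

lemma ES_diff: "ES w k (\<lambda>xs. F xs - G xs) = ES w k F - ES w k G"
  using ES_add[of w k F "\<lambda>xs. - G xs"] ES_cmult[of w k "-1" G] by simp

lemma ES_const: "sum w UNIV = 1 \<Longrightarrow> ES w k (\<lambda>_. c) = c"
  by (induction k) (auto simp: sum_distrib_right[symmetric])

lemma ES_mono: "(\<And>z. w z \<ge> 0) \<Longrightarrow> (\<And>xs. length xs = k \<Longrightarrow> F xs \<le> G xs) \<Longrightarrow> ES w k F \<le> ES w k G"
proof (induction k arbitrary: F G)
  case 0 then show ?case by simp
next
  case (Suc k)
  show ?case unfolding ES.simps
    by (rule Suc.IH) (auto intro!: sum_mono mult_left_mono Suc.prems)
qed

lemma ES_nonneg:
  assumes w: "\<And>z. w z \<ge> 0" shows "(\<And>xs. F xs \<ge> 0) \<Longrightarrow> ES w k F \<ge> 0"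
proof (induction k arbitrary: F)
  case 0 then show ?case by simp
next
  case (Suc k)
  show ?case unfolding ES.simps
    by (rule Suc.IH) (simp add: sum_nonneg Suc.prems w)
qed

lemma ES_front: "ES w (Suc k) F = (\<Sum>z\<in>UNIV. w z * ES w k (\<lambda>xs. F (z # xs)))"
proof (induction k arbitrary: F)
  case 0 then show ?case by simp
next
  case (Suc k)
  have "ES w (Suc (Suc k)) F = ES w (Suc k) (\<lambda>xs. \<Sum>z\<in>UNIV. w z * F (xs @ [z]))" by simp
  also have "\<dots> = (\<Sum>z\<in>UNIV. w z * ES w k (\<lambda>xs. \<Sum>z'\<in>UNIV. w z' * F (z # xs @ [z'])))"
    by (subst Suc.IH) simp
  also have "\<dots> = (\<Sum>z\<in>UNIV. w z * ES w (Suc k) (\<lambda>xs. F (z # xs)))" by simp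
  finally show ?case .
qed

lemma ES_take: "sum w UNIV = 1 \<Longrightarrow> m \<le> k \<Longrightarrow> ES w k (\<lambda>xs. H (take m xs)) = ES w m H"
proof (induction k)
  case 0 then show ?case by simp
next
  case (Suc k)
  show ?case
  proof (cases "m = Suc k")
    case True
    have "ES w (Suc k) (\<lambda>xs. H (take m xs)) = ES w (Suc k) H"
      by (rule ES_cong) (simp add: True)
    then show ?thesis using True by simp
  next
    case False
    then have "m \<le> k" using Suc by simp
    have "ES w (Suc k) (\<lambda>xs. H (take m xs)) = ES w k (\<lambda>xs. \<Sum>z\<in>UNIV. w z * H (take m (xs @ [z])))"
      by simp
    also have "\<dots> = ES w k (\<lambda>xs. (\<Sum>z\<in>UNIV. w z) * H (take m xs))"
      by (rule ES_cong) (simp add: \<open>m \<le> k\<close> sum_distrib_right)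
    finally show ?thesis using Suc.IH[OF Suc.prems(1) \<open>m \<le> k\<close>] Suc.prems by simp
  qed
qed

lemma bridge:
  fixes M :: "'a::finite pmf"
  assumes nn: "\<And>xs. F xs \<ge> 0"
  shows "(\<integral>\<^sup>+\<omega>. ennreal (F (stake k \<omega>)) \<partial>stream_space (measure_pmf M)) = ennreal (ES (pmf M) k F)"
  using nn
proof (induction k arbitrary: F)
  case 0
  interpret S: prob_space "stream_space (measure_pmf M)"
    by (rule prob_space.prob_space_stream_space) (rule prob_space_measure_pmf)
  show ?case by (simp add: S.emeasure_space_1)
next
  case (Suc k)
  have meas: "(\<lambda>\<omega>. ennreal (F (stake (Suc k) \<omega>))) \<in> borel_measurable (stream_space (measure_pmf M))"
  proof -
    have eq: "sets (stream_space (measure_pmf M)) = sets (stream_space (count_space UNIV))"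
      by (rule sets_stream_space_cong) simp
    have "stake (Suc k) \<in> measurable (stream_space (measure_pmf M)) (count_space UNIV)"
      unfolding measurable_cong_sets[OF eq refl] by (rule measurable_stake)
    then show ?thesis by (rule measurable_compose) (rule borel_measurable_count_space)
  qed
  have "(\<integral>\<^sup>+\<omega>. ennreal (F (stake (Suc k) \<omega>)) \<partial>stream_space (measure_pmf M))
     = (\<integral>\<^sup>+z. (\<integral>\<^sup>+\<omega>. ennreal (F (stake (Suc k) (z ## \<omega>))) \<partial>stream_space (measure_pmf M)) \<partial>measure_pmf M)"
    by (rule prob_space.nn_integral_stream_space[OF prob_space_measure_pmf meas])
  also have "\<dots> = (\<integral>\<^sup>+z. ennreal (ES (pmf M) k (\<lambda>xs. F (z # xs))) \<partial>measure_pmf M)"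
  proof (rule nn_integral_cong)
    fix z
    have "(\<integral>\<^sup>+\<omega>. ennreal (F (z # stake k \<omega>)) \<partial>stream_space (measure_pmf M)) = ennreal (ES (pmf M) k (\<lambda>xs. F (z # xs)))"
      by (rule Suc.IH) (rule Suc.prems)
    then show "(\<integral>\<^sup>+\<omega>. ennreal (F (stake (Suc k) (z ## \<omega>))) \<partial>stream_space (measure_pmf M)) = ennreal (ES (pmf M) k (\<lambda>xs. F (z # xs)))"
      by (simp only: stake.simps stream.sel)
  qed
  also have "\<dots> = (\<Sum>z\<in>UNIV. ennreal (pmf M z) * ennreal (ES (pmf M) k (\<lambda>xs. F (z # xs))))"
    by (simp only: nn_integral_measure_pmf nn_integral_count_space_finite[OF finite])
  also have "\<dots> = ennreal (\<Sum>z\<in>UNIV. pmf M z * ES (pmf M) k (\<lambda>xs. F (z # xs)))"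
  proof -
    have nn: "\<And>z. 0 \<le> ES (pmf M) k (\<lambda>xs. F (z # xs))"
      by (rule ES_nonneg) (rule pmf_nonneg, rule Suc.prems)
    have "\<And>z. ennreal (pmf M z) * ennreal (ES (pmf M) k (\<lambda>xs. F (z # xs))) = ennreal (pmf M z * ES (pmf M) k (\<lambda>xs. F (z # xs)))"
      by (rule ennreal_mult[symmetric]) (rule pmf_nonneg, rule nn)
    then have "(\<Sum>z\<in>UNIV. ennreal (pmf M z) * ennreal (ES (pmf M) k (\<lambda>xs. F (z # xs))))
       = (\<Sum>z\<in>UNIV. ennreal (pmf M z * ES (pmf M) k (\<lambda>xs. F (z # xs))))" by (rule sum.cong[OF refl])
    also have "\<dots> = ennreal (\<Sum>z\<in>UNIV. pmf M z * ES (pmf M) k (\<lambda>xs. F (z # xs)))"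
      by (rule sum_ennreal) (intro ballI mult_nonneg_nonneg pmf_nonneg nn)
    finally show ?thesis .
  qed
  also have "\<dots> = ennreal (ES (pmf M) (Suc k) F)" by (simp only: ES_front)
  finally show ?case .
qed



definition Tm :: "('s::finite \<Rightarrow> 'act::finite \<Rightarrow> 's pmf) \<Rightarrow> ('s \<times> 'act) pmf \<Rightarrow> real \<Rightarrow> real \<Rightarrow> ('s \<Rightarrow> 'act)
   \<Rightarrow> ('s, 'act) qfun \<Rightarrow> ('s, 'act) qfun" where
  "Tm P d \<alpha> \<gamma> \<pi> E = (\<lambda>(x, y). E (x, y) + \<alpha> * \<gamma> * pmf d (x, y) * (\<Sum>t\<in>UNIV. pmf (P x y) t * E (t, \<pi> t))
      - \<alpha> * pmf d (x, y) * E (x, y))"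

definition TK :: "('s::finite \<Rightarrow> 'act::finite \<Rightarrow> 's pmf) \<Rightarrow> ('s \<times> 'act) pmf \<Rightarrow> real \<Rightarrow> real \<Rightarrow> ('s \<Rightarrow> 'act)
   \<Rightarrow> 's \<times> 'act \<Rightarrow> 's \<times> 'act \<Rightarrow> real" where
  "TK P d \<alpha> \<gamma> \<pi> p q = (if q = p then 1 - \<alpha> * pmf d p else 0)
     + \<alpha> * \<gamma> * pmf d p * (if snd q = \<pi> (fst q) then pmf (P (fst p) (snd p)) (fst q) else 0)"

lemma sum_pair_UNIV: "(\<Sum>z\<in>(UNIV::('a::finite \<times> 'b::finite) set). g z) = (\<Sum>x\<in>UNIV. \<Sum>y\<in>UNIV. g (x, y))"
  by (simp add: sum.cartesian_product)

lemma Tm_kernel: "Tm P d \<alpha> \<gamma> \<pi> E p = (\<Sum>q\<in>UNIV. TK P d \<alpha> \<gamma> \<pi> p q * E q)"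
proof -
  obtain x y where p: "p = (x, y)" by (cases p)
  then have fp: "fst p = x" "snd p = y" by auto
  have 1: "(\<Sum>q\<in>UNIV. (if q = p then 1 - \<alpha> * pmf d p else 0) * E q) = (1 - \<alpha> * pmf d p) * E p"
    by (simp add: if_distrib[where f="\<lambda>u. u * _"] cong: if_cong)
  have 2: "(\<Sum>q\<in>UNIV. (if snd q = \<pi> (fst q) then pmf (P x y) (fst q) else 0) * E q)
      = (\<Sum>t\<in>UNIV. pmf (P x y) t * E (t, \<pi> t))"
    unfolding sum_pair_UNIV
    by (rule sum.cong[OF refl]) (simp add: if_distrib[where f="\<lambda>u. u * _"] cong: if_cong)
  have "(\<Sum>q\<in>UNIV. TK P d \<alpha> \<gamma> \<pi> p q * E q) = (\<Sum>q\<in>UNIV. (if q = p then 1 - \<alpha> * pmf d p else 0) * E q)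
     + \<alpha> * \<gamma> * pmf d p * (\<Sum>q\<in>UNIV. (if snd q = \<pi> (fst q) then pmf (P x y) (fst q) else 0) * E q)"
    unfolding TK_def fp by (simp add: algebra_simps sum.distrib sum_distrib_left)
  also have "\<dots> = Tm P d \<alpha> \<gamma> \<pi> E p"
    unfolding 1 using 2 by (simp add: Tm_def p algebra_simps)
  finally show ?thesis by simp
qed

fun TKp :: "('s::finite \<Rightarrow> 'act::finite \<Rightarrow> 's pmf) \<Rightarrow> ('s \<times> 'act) pmf \<Rightarrow> real \<Rightarrow> real \<Rightarrow> ('s \<Rightarrow> 'act)
   \<Rightarrow> nat \<Rightarrow> 's \<times> 'act \<Rightarrow> 's \<times> 'act \<Rightarrow> real" where
  "TKp P d \<alpha> \<gamma> \<pi> 0 p q = (if p = q then 1 else 0)"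
| "TKp P d \<alpha> \<gamma> \<pi> (Suc m) p q = (\<Sum>u\<in>UNIV. TK P d \<alpha> \<gamma> \<pi> p u * TKp P d \<alpha> \<gamma> \<pi> m u q)"

lemma Tm_pow_kernel: "(Tm P d \<alpha> \<gamma> \<pi> ^^ m) E p = (\<Sum>q\<in>UNIV. TKp P d \<alpha> \<gamma> \<pi> m p q * E q)"
proof (induction m arbitrary: p)
  case 0 then show ?case by (simp add: if_distrib[where f="\<lambda>u. u * _"] cong: if_cong)
next
  case (Suc m)
  have "(Tm P d \<alpha> \<gamma> \<pi> ^^ Suc m) E p = (\<Sum>u\<in>UNIV. TK P d \<alpha> \<gamma> \<pi> p u * (\<Sum>q\<in>UNIV. TKp P d \<alpha> \<gamma> \<pi> m u q * E q))"
    by (simp add: Tm_kernel Suc.IH)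
  also have "\<dots> = (\<Sum>q\<in>UNIV. TKp P d \<alpha> \<gamma> \<pi> (Suc m) p q * E q)"
    by (simp add: sum_distrib_left sum_distrib_right mult.assoc) (rule sum.swap)
  finally show ?case .
qed

lemma Tm_pow_lin: "(Tm P d \<alpha> \<gamma> \<pi> ^^ m) (\<lambda>q. \<Sum>i\<in>A. c i * g i q) p = (\<Sum>i\<in>A. c i * (Tm P d \<alpha> \<gamma> \<pi> ^^ m) (g i) p)"
  unfolding Tm_pow_kernel
  by (simp add: sum_distrib_left mult.left_commute) (rule sum.swap)

lemma Tm_lin2: "Tm P d \<alpha> \<gamma> \<pi> (\<lambda>q. a q + c * (\<Sum>i\<in>A. g i q)) p = Tm P d \<alpha> \<gamma> \<pi> a p + c * (\<Sum>i\<in>A. Tm P d \<alpha> \<gamma> \<pi> (g i) p)"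
proof -
  have "(\<Sum>q\<in>UNIV. TK P d \<alpha> \<gamma> \<pi> p q * (a q + c * (\<Sum>i\<in>A. g i q)))
     = (\<Sum>q\<in>UNIV. TK P d \<alpha> \<gamma> \<pi> p q * a q) + c * (\<Sum>q\<in>UNIV. \<Sum>i\<in>A. TK P d \<alpha> \<gamma> \<pi> p q * g i q)"
    by (simp add: distrib_left sum.distrib sum_distrib_left mult.left_commute)
  also have "(\<Sum>q\<in>UNIV. \<Sum>i\<in>A. TK P d \<alpha> \<gamma> \<pi> p q * g i q) = (\<Sum>i\<in>A. \<Sum>q\<in>UNIV. TK P d \<alpha> \<gamma> \<pi> p q * g i q)"
    by (rule sum.swap)
  finally show ?thesis unfolding Tm_kernel .
qed



lemma sum_pmf_UNIV: "(\<Sum>x\<in>UNIV. pmf (p::'a::finite pmf) x) = 1"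
  by (rule sum_pmf_eq_1) auto

lemma abs_comb: assumes "0 \<le> a" "0 \<le> b" shows "\<bar>a * u + b * w\<bar> \<le> a * \<bar>u\<bar> + b * \<bar>w::real\<bar>"
proof -
  have "\<bar>a * u + b * w\<bar> \<le> \<bar>a * u\<bar> + \<bar>b * w\<bar>" by (rule abs_triangle_ineq)
  also have "\<dots> = a * \<bar>u\<bar> + b * \<bar>w\<bar>" using assms by (simp add: abs_mult)
  finally show ?thesis .
qed

lemma Tm_contr:
  assumes g: "0 < \<gamma>" "\<gamma> < 1" and a: "0 < \<alpha>" "\<alpha> < 1"
    and dm: "\<And>q. dm \<le> pmf d q"
    and v: "\<And>q. \<bar>v q\<bar> \<le> c"
  shows "\<bar>Tm P d \<alpha> \<gamma> \<pi> v p\<bar> \<le> (1 - \<alpha> * dm * (1 - \<gamma>)) * c"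
proof -
  obtain x y where p: "p = (x, y)" by (cases p)
  let ?D = "pmf d (x, y)"
  have c0: "0 \<le> c" using v[of p] by linarith
  have D1: "?D \<le> 1" by (rule pmf_le_1)
  have D0: "0 \<le> ?D" by simp
  have S: "\<bar>\<Sum>t\<in>UNIV. pmf (P x y) t * v (t, \<pi> t)\<bar> \<le> c"
  proof -
    have "\<bar>\<Sum>t\<in>UNIV. pmf (P x y) t * v (t, \<pi> t)\<bar> \<le> (\<Sum>t\<in>UNIV. \<bar>pmf (P x y) t * v (t, \<pi> t)\<bar>)"
      by (rule sum_abs)
    also have "\<dots> \<le> (\<Sum>t\<in>UNIV. pmf (P x y) t * c)"
      by (rule sum_mono) (simp add: abs_mult mult_left_mono v)
    also have "\<dots> = c" by (simp add: sum_distrib_right[symmetric] sum_pmf_UNIV)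
    finally show ?thesis .
  qed
  have eq: "Tm P d \<alpha> \<gamma> \<pi> v p = (1 - \<alpha> * ?D) * v (x, y) + (\<alpha> * \<gamma> * ?D) * (\<Sum>t\<in>UNIV. pmf (P x y) t * v (t, \<pi> t))"
    by (simp add: Tm_def p algebra_simps)
  have "\<alpha> * ?D \<le> 1 * 1" by (rule mult_mono) (use a D1 D0 in auto)
  then have A: "0 \<le> 1 - \<alpha> * ?D" by simp
  have B: "0 \<le> \<alpha> * \<gamma> * ?D" using a g D0 by simp
  have "\<bar>Tm P d \<alpha> \<gamma> \<pi> v p\<bar> \<le> (1 - \<alpha> * ?D) * \<bar>v (x, y)\<bar> + (\<alpha> * \<gamma> * ?D) * \<bar>\<Sum>t\<in>UNIV. pmf (P x y) t * v (t, \<pi> t)\<bar>"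
    unfolding eq by (rule abs_comb[OF A B])
  also have "\<dots> \<le> (1 - \<alpha> * ?D) * c + (\<alpha> * \<gamma> * ?D) * c"
    by (intro add_mono mult_left_mono A B S v)
  also have "\<dots> = (1 - \<alpha> * ?D * (1 - \<gamma>)) * c" by (simp add: algebra_simps)
  also have "\<dots> \<le> (1 - \<alpha> * dm * (1 - \<gamma>)) * c"
  proof (rule mult_right_mono[OF _ c0])
    have "\<alpha> * dm * (1 - \<gamma>) \<le> \<alpha> * ?D * (1 - \<gamma>)"
      using dm[of "(x,y)"] a g by (intro mult_right_mono mult_left_mono) auto
    then show "1 - \<alpha> * ?D * (1 - \<gamma>) \<le> 1 - \<alpha> * dm * (1 - \<gamma>)" by linarith
  qed
  finally show ?thesis .
qed

lemma Tm_pow_contr: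
  assumes g: "0 < \<gamma>" "\<gamma> < 1" and a: "0 < \<alpha>" "\<alpha> < 1"
    and dm: "\<And>q. dm \<le> pmf d q" and dm0: "0 \<le> dm"
    and v: "\<And>q. \<bar>v q\<bar> \<le> c"
  shows "\<bar>(Tm P d \<alpha> \<gamma> \<pi> ^^ m) v p\<bar> \<le> (1 - \<alpha> * dm * (1 - \<gamma>)) ^ m * c"
proof (induction m arbitrary: p)
  case 0 then show ?case using v by simp
next
  case (Suc m)
  have "\<bar>Tm P d \<alpha> \<gamma> \<pi> ((Tm P d \<alpha> \<gamma> \<pi> ^^ m) v) p\<bar> \<le> (1 - \<alpha> * dm * (1 - \<gamma>)) * ((1 - \<alpha> * dm * (1 - \<gamma>)) ^ m * c)"
    by (rule Tm_contr[OF g a dm Suc.IH])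
  then show ?case by (simp add: mult.assoc)
qed

lemma abs_le_l2norm: "\<bar>v q\<bar> \<le> l2norm (v::'a::finite \<Rightarrow> real)"
  unfolding l2norm_def
proof (rule real_le_rsqrt)
  show "\<bar>v q\<bar>\<^sup>2 \<le> (\<Sum>x\<in>UNIV. (v x)\<^sup>2)"
    using member_le_sum[of q UNIV "\<lambda>x. (v x)\<^sup>2"] by simp
qed

lemma l2norm_sq: "(l2norm v)\<^sup>2 = (\<Sum>x\<in>UNIV. (v x)\<^sup>2)"
  unfolding l2norm_def by (simp add: sum_nonneg)

lemma l2norm_nonneg: "0 \<le> l2norm v"
  unfolding l2norm_def by (simp add: sum_nonneg)

lemma l2norm_tri: "l2norm (\<lambda>p. a p + c * b p) \<le> l2norm a + \<bar>c\<bar> * l2norm b"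
proof -
  have "l2norm (\<lambda>p. a p + c * b p) \<le> l2norm a + l2norm (\<lambda>p. c * b p)"
    unfolding l2norm_def using L2_set_triangle_ineq[of a "\<lambda>p. c * b p" UNIV] by (simp add: L2_set_def)
  also have "l2norm (\<lambda>p. c * b p) = \<bar>c\<bar> * l2norm b"
    unfolding l2norm_def by (simp add: power_mult_distrib sum_distrib_left[symmetric] real_sqrt_mult)
  finally show ?thesis .
qed



lemma pmf_sample:
  fixes P :: "'s::finite \<Rightarrow> 'act::finite \<Rightarrow> 's pmf"
  shows "pmf (sample_pmf d P) (s, a, s') = pmf d (s, a) * pmf (P s a) s'"
proof -
  have inner: "pmf ((\<lambda>(s0, a0). map_pmf (\<lambda>s''. (s0, a0, s'')) (P s0 a0)) x) (s, a, s')
      = (if x = (s, a) then pmf (P s a) s' else 0)" for x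
  proof (cases x)
    case (Pair s0 a0)
    show ?thesis
    proof (cases "x = (s, a)")
      case True
      have i: "inj (\<lambda>s''. (s, a, s''))" by (auto simp: inj_on_def)
      show ?thesis using True Pair pmf_map_inj'[OF i, of "P s a" s'] by simp
    next
      case False
      then show ?thesis using Pair by (auto intro!: pmf_map_outside)
    qed
  qed
  have "pmf (sample_pmf d P) (s, a, s') = (\<Sum>x\<in>UNIV. (if x = (s, a) then pmf (P s a) s' else 0) * pmf d x)"
    unfolding sample_pmf_def pmf_bind inner
    by (rule integral_measure_pmf_real) auto
  also have "\<dots> = (\<Sum>x\<in>UNIV. if x = (s, a) then pmf (P s a) s' * pmf d x else 0)"
    by (rule sum.cong) auto
  also have "\<dots> = pmf d (s, a) * pmf (P s a) s'" by simp
  finally show ?thesis .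
qed

lemma sum_sample:
  fixes P :: "'s::finite \<Rightarrow> 'act::finite \<Rightarrow> 's pmf"
  shows "(\<Sum>z\<in>UNIV. pmf (sample_pmf d P) z * f z)
   = (\<Sum>s\<in>UNIV. \<Sum>a\<in>UNIV. pmf d (s, a) * (\<Sum>s'\<in>UNIV. pmf (P s a) s' * f (s, a, s')))"
  unfolding sum_pair_UNIV pmf_sample
  by (simp add: sum_distrib_left mult.assoc)

definition Yn :: "('s::finite \<Rightarrow> 'act::{finite,linorder} \<Rightarrow> 's pmf) \<Rightarrow> ('s \<Rightarrow> 'act \<Rightarrow> 's \<Rightarrow> real) \<Rightarrow> real
    \<Rightarrow> ('s, 'act) qfun \<Rightarrow> ('s, 'act) qfun \<Rightarrow> 's \<times> 'act \<times> 's \<Rightarrow> 's \<times> 'act \<Rightarrow> real" where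
  "Yn P r \<gamma> QA QB z q = (if q = (fst z, fst (snd z)) then r (fst z) (fst (snd z)) (snd (snd z))
      + \<gamma> * QA (snd (snd z), greedy QB (snd (snd z))) - QA (fst z, fst (snd z)) else 0)"

definition en :: "('s::finite \<Rightarrow> 'act::{finite,linorder} \<Rightarrow> 's pmf) \<Rightarrow> ('s \<Rightarrow> 'act \<Rightarrow> 's \<Rightarrow> real) \<Rightarrow> real
    \<Rightarrow> ('s \<times> 'act) pmf \<Rightarrow> ('s, 'act) qfun \<Rightarrow> ('s, 'act) qfun \<Rightarrow> 's \<times> 'act \<Rightarrow> real" where
  "en P r \<gamma> d QA QB q = pmf d q * (expR P r (fst q) (snd q)
      + \<gamma> * (\<Sum>t\<in>UNIV. pmf (P (fst q) (snd q)) t * QA (t, greedy QB t)) - QA q)"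

lemma noise_split: "noise P r \<gamma> d QA QB z q = Yn P r \<gamma> QA QB z q - en P r \<gamma> d QA QB q"
  by (cases z; cases q) (simp add: noise_def Yn_def en_def)

lemma Yn_mean: "(\<Sum>z\<in>UNIV. pmf (sample_pmf d P) z * Yn P r \<gamma> QA QB z q) = en P r \<gamma> d QA QB q"
proof -
  obtain x y where q: "q = (x, y)" by (cases q)
  let ?h = "\<lambda>s'. r x y s' + \<gamma> * QA (s', greedy QB s') - QA (x, y)"
  have e: "(\<Sum>a\<in>UNIV. pmf d (s, a) * (\<Sum>s'\<in>UNIV. pmf (P s a) s' * Yn P r \<gamma> QA QB (s, a, s') q))
     = (if s = x then pmf d (x, y) * (\<Sum>s'\<in>UNIV. pmf (P x y) s' * ?h s') else 0)" for s
  proof (cases "s = x")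
    case True
    have "(\<Sum>a\<in>UNIV. pmf d (s, a) * (\<Sum>s'\<in>UNIV. pmf (P s a) s' * Yn P r \<gamma> QA QB (s, a, s') q))
       = (\<Sum>a\<in>UNIV. if a = y then pmf d (x, y) * (\<Sum>s'\<in>UNIV. pmf (P x y) s' * ?h s') else 0)"
      by (rule sum.cong) (auto simp: Yn_def q True)
    then show ?thesis using True by simp
  next
    case False
    then show ?thesis by (simp add: Yn_def q)
  qed
  have "(\<Sum>z\<in>UNIV. pmf (sample_pmf d P) z * Yn P r \<gamma> QA QB z q) = pmf d (x, y) * (\<Sum>s'\<in>UNIV. pmf (P x y) s' * ?h s')"
    unfolding sum_sample e by simp
  also have "(\<Sum>s'\<in>UNIV. pmf (P x y) s' * ?h s') = expR P r x y
      + \<gamma> * (\<Sum>t\<in>UNIV. pmf (P x y) t * QA (t, greedy QB t)) - QA (x, y)"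
  proof -
    have aux: "(\<Sum>s'\<in>UNIV. QA (x, y) * pmf (P x y) s') = QA (x, y)"
      by (simp add: sum_distrib_left[symmetric] sum_pmf_UNIV)
    show ?thesis
      by (simp add: expR_def algebra_simps sum.distrib sum_subtractf sum_distrib_left aux)
  qed
  finally show ?thesis by (simp add: en_def q)
qed

lemma noise_mean: "(\<Sum>z\<in>UNIV. pmf (sample_pmf d P) z * noise P r \<gamma> d QA QB z q) = 0"
proof -
  have "(\<Sum>z\<in>UNIV. pmf (sample_pmf d P) z * noise P r \<gamma> d QA QB z q)
     = (\<Sum>z\<in>UNIV. pmf (sample_pmf d P) z * Yn P r \<gamma> QA QB z q) - (\<Sum>z\<in>UNIV. pmf (sample_pmf d P) z) * en P r \<gamma> d QA QB q"
    unfolding noise_split by (simp add: algebra_simps sum_subtractf sum_distrib_right)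
  then show ?thesis by (simp add: Yn_mean sum_pmf_UNIV)
qed

lemma var_le:
  fixes w Y :: "'a::finite \<Rightarrow> real"
  assumes w1: "(\<Sum>z\<in>UNIV. w z) = 1" and w0: "\<And>z. 0 \<le> w z"
    and m: "(\<Sum>z\<in>UNIV. w z * (Y z - e)) = 0"
  shows "(\<Sum>z\<in>UNIV. w z * (Y z - e)\<^sup>2) \<le> (\<Sum>z\<in>UNIV. w z * (Y z)\<^sup>2)"
proof -
  have "(\<Sum>z\<in>UNIV. w z * (Y z - e)) = (\<Sum>z\<in>UNIV. w z * Y z) - e * (\<Sum>z\<in>UNIV. w z)"
    by (simp add: right_diff_distrib sum_subtractf sum_distrib_left mult.commute)
  then have h1: "(\<Sum>z\<in>UNIV. w z * Y z) = e" using m w1 by simp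
  have "(\<Sum>z\<in>UNIV. w z * (Y z - e)\<^sup>2) = (\<Sum>z\<in>UNIV. w z * (Y z)\<^sup>2 - 2 * e * (w z * Y z) + e\<^sup>2 * w z)"
    by (rule sum.cong) (simp_all add: power2_eq_square algebra_simps)
  also have "\<dots> = (\<Sum>z\<in>UNIV. w z * (Y z)\<^sup>2) - 2 * e * (\<Sum>z\<in>UNIV. w z * Y z) + e\<^sup>2 * (\<Sum>z\<in>UNIV. w z)"
    by (simp add: sum.distrib sum_subtractf sum_distrib_left)
  also have "\<dots> = (\<Sum>z\<in>UNIV. w z * (Y z)\<^sup>2) - e\<^sup>2" using h1 w1 by (simp add: power2_eq_square)
  finally show ?thesis by simp
qed



lemma noise_var:
  fixes P :: "'s::finite \<Rightarrow> 'act::{finite,linorder} \<Rightarrow> 's pmf"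
  assumes A: "\<And>q. \<bar>QA q\<bar> \<le> Bd" and B: "\<And>q. \<bar>QB q\<bar> \<le> Bd" and g: "0 \<le> \<gamma>" "\<gamma> \<le> 1"
  shows "(\<Sum>z\<in>UNIV. pmf (sample_pmf d P) z * (\<Sum>q\<in>UNIV. (noise P r \<gamma> d QA QB z q - noise P r \<gamma> d QB QA z q)\<^sup>2)) \<le> (4 * Bd)\<^sup>2"
proof -
  let ?w = "pmf (sample_pmf d P)"
  let ?Y = "\<lambda>z q. Yn P r \<gamma> QA QB z q - Yn P r \<gamma> QB QA z q"
  let ?e = "\<lambda>q. en P r \<gamma> d QA QB q - en P r \<gamma> d QB QA q"
  have N: "noise P r \<gamma> d QA QB z q - noise P r \<gamma> d QB QA z q = ?Y z q - ?e q" for z q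
    by (simp add: noise_split)
  have m: "(\<Sum>z\<in>UNIV. ?w z * (?Y z q - ?e q)) = 0" for q
  proof -
    have "(\<Sum>z\<in>UNIV. ?w z * (?Y z q - ?e q)) = (\<Sum>z\<in>UNIV. ?w z * noise P r \<gamma> d QA QB z q) - (\<Sum>z\<in>UNIV. ?w z * noise P r \<gamma> d QB QA z q)"
      unfolding N[symmetric] by (simp add: right_diff_distrib sum_subtractf)
    then show ?thesis by (simp add: noise_mean)
  qed
  have Bd0: "0 \<le> Bd" using A[of undefined] by linarith
  have Ybound: "(\<Sum>q\<in>UNIV. (?Y z q)\<^sup>2) \<le> (4 * Bd)\<^sup>2" for z
  proof -
    obtain s a s' where z: "z = (s, a, s')" by (cases z) auto
    define v where "v = (r s a s' + \<gamma> * QA (s', greedy QB s') - QA (s, a)) - (r s a s' + \<gamma> * QB (s', greedy QA s') - QB (s, a))"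
    have Y: "?Y z q = (if q = (s, a) then v else 0)" for q
      by (simp add: Yn_def z v_def)
    have "(\<Sum>q\<in>UNIV. (?Y z q)\<^sup>2) = (\<Sum>q\<in>UNIV. if q = (s, a) then v\<^sup>2 else 0)"
      unfolding Y by (rule sum.cong) auto
    also have "\<dots> = v\<^sup>2" by simp
    also have "\<dots> \<le> (4 * Bd)\<^sup>2"
    proof -
      have v: "v = \<gamma> * (QA (s', greedy QB s') - QB (s', greedy QA s')) - (QA (s, a) - QB (s, a))"
        by (simp add: v_def algebra_simps)
      have d1: "\<bar>QA (s', greedy QB s') - QB (s', greedy QA s')\<bar> \<le> 2 * Bd"
        using A[of "(s', greedy QB s')"] B[of "(s', greedy QA s')"] by linarith
      have d2: "\<bar>QA (s, a) - QB (s, a)\<bar> \<le> 2 * Bd"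
        using A[of "(s, a)"] B[of "(s, a)"] by linarith
      have "\<bar>\<gamma> * (QA (s', greedy QB s') - QB (s', greedy QA s'))\<bar> \<le> 1 * (2 * Bd)"
        unfolding abs_mult using g d1 by (intro mult_mono) auto
      then have "\<bar>v\<bar> \<le> 4 * Bd" unfolding v using d2 by linarith
      then have "\<bar>v\<bar>\<^sup>2 \<le> (4 * Bd)\<^sup>2" by (intro power_mono) auto
      then show ?thesis by simp
    qed
    finally show ?thesis .
  qed
  have "(\<Sum>z\<in>UNIV. ?w z * (\<Sum>q\<in>UNIV. (noise P r \<gamma> d QA QB z q - noise P r \<gamma> d QB QA z q)\<^sup>2))
      = (\<Sum>q\<in>UNIV. \<Sum>z\<in>UNIV. ?w z * (?Y z q - ?e q)\<^sup>2)"
    unfolding N by (simp add: sum_distrib_left) (rule sum.swap)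
  also have "\<dots> \<le> (\<Sum>q\<in>UNIV. \<Sum>z\<in>UNIV. ?w z * (?Y z q)\<^sup>2)"
    by (rule sum_mono) (rule var_le[OF sum_pmf_UNIV pmf_nonneg m])
  also have "\<dots> = (\<Sum>z\<in>UNIV. ?w z * (\<Sum>q\<in>UNIV. (?Y z q)\<^sup>2))"
    by (simp add: sum_distrib_left) (rule sum.swap)
  also have "\<dots> \<le> (\<Sum>z\<in>UNIV. ?w z * (4 * Bd)\<^sup>2)"
    by (rule sum_mono) (rule mult_left_mono[OF Ybound pmf_nonneg])
  also have "\<dots> = (4 * Bd)\<^sup>2" by (simp add: sum_distrib_right[symmetric] sum_pmf_UNIV)
  finally show ?thesis .
qed

definition sdqL where "sdqL \<alpha> \<gamma> r QA0 QB0 ys = foldl (sdq_step \<alpha> \<gamma> r) (QA0, QB0) ys"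

lemma sdq_stake: "sdq \<alpha> \<gamma> r QA0 QB0 k \<omega> = sdqL \<alpha> \<gamma> r QA0 QB0 (stake k \<omega>)"
  by (induction k) (simp_all add: sdqL_def stake_Suc del: stake.simps(2))

lemma upd_bound:
  fixes u v rr Bd \<alpha> \<gamma> :: real
  assumes u: "\<bar>u\<bar> \<le> Bd" and v: "\<bar>v\<bar> \<le> Bd" and rr: "\<bar>rr\<bar> \<le> 1" and Bd: "Bd * (1 - \<gamma>) = 1"
    and a: "0 < \<alpha>" "\<alpha> < 1" and g: "0 \<le> \<gamma>"
  shows "\<bar>u + \<alpha> * (rr + \<gamma> * v - u)\<bar> \<le> Bd"
proof -
  have e: "u + \<alpha> * (rr + \<gamma> * v - u) = (1 - \<alpha>) * u + \<alpha> * (rr + \<gamma> * v)" by (simp add: algebra_simps)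
  have "\<bar>rr + \<gamma> * v\<bar> \<le> 1 + \<gamma> * Bd"
  proof -
    have "\<bar>\<gamma> * v\<bar> \<le> \<gamma> * Bd" unfolding abs_mult using g v by (simp add: mult_left_mono)
    then show ?thesis using rr by linarith
  qed
  then have "\<bar>(1 - \<alpha>) * u + \<alpha> * (rr + \<gamma> * v)\<bar> \<le> (1 - \<alpha>) * Bd + \<alpha> * (1 + \<gamma> * Bd)"
    using abs_comb[of "1 - \<alpha>" \<alpha> u "rr + \<gamma> * v"] a u
    by (smt (verit, best) mult_left_mono)
  also have "\<dots> = Bd" using Bd by (simp add: algebra_simps)
  finally show ?thesis unfolding e .
qed

lemma sdqL_bound:
  assumes QA0: "\<And>q. \<bar>QA0 q\<bar> \<le> Bd" and QB0: "\<And>q. \<bar>QB0 q\<bar> \<le> Bd"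
    and rew: "\<And>s a s'. \<bar>r s a s'\<bar> \<le> 1" and Bd: "Bd * (1 - \<gamma>) = 1"
    and a: "0 < \<alpha>" "\<alpha> < 1" and g: "0 \<le> \<gamma>"
  shows "\<bar>fst (sdqL \<alpha> \<gamma> r QA0 QB0 ys) q\<bar> \<le> Bd \<and> \<bar>snd (sdqL \<alpha> \<gamma> r QA0 QB0 ys) q\<bar> \<le> Bd"
proof (induction ys arbitrary: q rule: rev_induct)
  case Nil then show ?case using QA0 QB0 by (simp add: sdqL_def)
next
  case (snoc z ys)
  obtain QA QB where S: "sdqL \<alpha> \<gamma> r QA0 QB0 ys = (QA, QB)" by (cases "sdqL \<alpha> \<gamma> r QA0 QB0 ys")
  have bA: "\<And>q. \<bar>QA q\<bar> \<le> Bd" and bB: "\<And>q. \<bar>QB q\<bar> \<le> Bd" using snoc.IH S by (metis fst_conv snd_conv)+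
  obtain s a s' where z: "z = (s, a, s')" by (cases z) auto
  have eq: "sdqL \<alpha> \<gamma> r QA0 QB0 (ys @ [z]) = sdq_step \<alpha> \<gamma> r (QA, QB) (s, a, s')"
    using S z by (simp add: sdqL_def)
  show ?case unfolding eq sdq_step_def
    by (auto simp: bA bB intro: upd_bound[OF bA bA rew Bd a g] upd_bound[OF bB bB rew Bd a g])
qed



definition UL where
  "UL P r \<gamma> d \<alpha> QA0 QB0 ys z = (\<lambda>q. noise P r \<gamma> d (fst (sdqL \<alpha> \<gamma> r QA0 QB0 ys)) (snd (sdqL \<alpha> \<gamma> r QA0 QB0 ys)) z q
       - noise P r \<gamma> d (snd (sdqL \<alpha> \<gamma> r QA0 QB0 ys)) (fst (sdqL \<alpha> \<gamma> r QA0 QB0 ys)) z q)"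

lemma err_step:
  fixes P :: "'s::finite \<Rightarrow> 'act::{finite,linorder} \<Rightarrow> 's pmf"
  shows "err_UL P r \<gamma> d \<alpha> QA0 QB0 E0 (Suc k) \<omega> = (\<lambda>p. Tm P d \<alpha> \<gamma> (greedy (Qstar P r \<gamma>)) (err_UL P r \<gamma> d \<alpha> QA0 QB0 E0 k \<omega>) p
      + \<alpha> * UL P r \<gamma> d \<alpha> QA0 QB0 (stake k \<omega>) (\<omega> !! k) p)"
  by (rule ext) (auto simp: Let_def Tm_def UL_def sdq_stake algebra_simps split: prod.splits)

lemma err_closed:
  fixes P :: "'s::finite \<Rightarrow> 'act::{finite,linorder} \<Rightarrow> 's pmf"
  shows "err_UL P r \<gamma> d \<alpha> QA0 QB0 E0 k \<omega> = (\<lambda>p. (Tm P d \<alpha> \<gamma> (greedy (Qstar P r \<gamma>)) ^^ k) E0 p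
     + \<alpha> * (\<Sum>i<k. (Tm P d \<alpha> \<gamma> (greedy (Qstar P r \<gamma>)) ^^ (k - 1 - i)) (UL P r \<gamma> d \<alpha> QA0 QB0 (stake i \<omega>) (\<omega> !! i)) p))"
proof (induction k)
  case 0 then show ?case by simp
next
  case (Suc k)
  define T where "T = Tm P d \<alpha> \<gamma> (greedy (Qstar P r \<gamma>))"
  define U where "U = (\<lambda>i. UL P r \<gamma> d \<alpha> QA0 QB0 (stake i \<omega>) (\<omega> !! i))"
  have IH: "err_UL P r \<gamma> d \<alpha> QA0 QB0 E0 k \<omega> = (\<lambda>p. (T ^^ k) E0 p + \<alpha> * (\<Sum>i<k. (T ^^ (k - 1 - i)) (U i) p))"
    using Suc.IH unfolding T_def U_def .
  have s: "(\<Sum>i<Suc k. (T ^^ (k - i)) (U i) p) = (\<Sum>i<k. T ((T ^^ (k - Suc i)) (U i)) p) + U k p" for p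
  proof -
    have "(\<Sum>i<k. (T ^^ (k - i)) (U i) p) = (\<Sum>i<k. T ((T ^^ (k - Suc i)) (U i)) p)"
    proof (rule sum.cong[OF refl])
      fix i assume "i \<in> {..<k}"
      then have "k - i = Suc (k - Suc i)" by auto
      then show "(T ^^ (k - i)) (U i) p = T ((T ^^ (k - Suc i)) (U i)) p" by simp
    qed
    then show ?thesis by simp
  qed
  show ?case
  proof (rule ext)
    fix p
    have "err_UL P r \<gamma> d \<alpha> QA0 QB0 E0 (Suc k) \<omega> p = T (err_UL P r \<gamma> d \<alpha> QA0 QB0 E0 k \<omega>) p + \<alpha> * U k p"
      unfolding err_step T_def U_def by simp
    also have "\<dots> = (T ^^ Suc k) E0 p + \<alpha> * (\<Sum>i<Suc k. (T ^^ (k - i)) (U i) p)"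
      unfolding IH T_def Tm_lin2 using s[unfolded T_def] by (simp add: algebra_simps)
    finally show "err_UL P r \<gamma> d \<alpha> QA0 QB0 E0 (Suc k) \<omega> p = (Tm P d \<alpha> \<gamma> (greedy (Qstar P r \<gamma>)) ^^ Suc k) E0 p
     + \<alpha> * (\<Sum>i<Suc k. (Tm P d \<alpha> \<gamma> (greedy (Qstar P r \<gamma>)) ^^ (Suc k - 1 - i)) (UL P r \<gamma> d \<alpha> QA0 QB0 (stake i \<omega>) (\<omega> !! i)) p)"
      unfolding T_def U_def by simp
  qed
qed

lemma meas_stake:
  fixes M :: "'a::finite pmf" and F :: "'a list \<Rightarrow> real"
  shows "(\<lambda>\<omega>. F (stake k \<omega>)) \<in> borel_measurable (stream_space (measure_pmf M))"
proof -
  have eq: "sets (stream_space (measure_pmf M)) = sets (stream_space (count_space UNIV))"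
    by (rule sets_stream_space_cong) simp
  have "stake k \<in> measurable (stream_space (measure_pmf M)) (count_space UNIV)"
    unfolding measurable_cong_sets[OF eq refl] by (rule measurable_stake)
  then show ?thesis by (rule measurable_compose) (rule borel_measurable_count_space)
qed

lemma integral_stake:
  fixes M :: "'a::finite pmf"
  assumes nn: "\<And>xs. F xs \<ge> 0"
  shows "integral\<^sup>L (stream_space (measure_pmf M)) (\<lambda>\<omega>. F (stake k \<omega>)) = ES (pmf M) k F"
proof -
  have "integral\<^sup>L (stream_space (measure_pmf M)) (\<lambda>\<omega>. F (stake k \<omega>))
      = enn2real (\<integral>\<^sup>+\<omega>. ennreal (F (stake k \<omega>)) \<partial>stream_space (measure_pmf M))"
    by (rule integral_eq_nn_integral) (auto simp: nn meas_stake)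
  also have "\<dots> = ES (pmf M) k F"
    by (subst bridge[OF nn]) (rule enn2real_ennreal, rule ES_nonneg[OF pmf_nonneg nn])
  finally show ?thesis .
qed

lemma ES_orth:
  assumes w1: "sum w UNIV = 1" and w0: "\<And>z. 0 \<le> w z"
    and gG: "\<And>i xs. i < k \<Longrightarrow> length xs = k \<Longrightarrow> g i xs = G i (take (Suc i) xs)"
    and mz: "\<And>i ys. i < k \<Longrightarrow> length ys = i \<Longrightarrow> (\<Sum>z\<in>UNIV. w z * G i (ys @ [z])) = 0"
  shows "ES w k (\<lambda>xs. (\<Sum>i<k. g i xs)\<^sup>2) = (\<Sum>i<k. ES w k (\<lambda>xs. (g i xs)\<^sup>2))"
proof -
  have cross: "ES w k (\<lambda>xs. g i xs * g j xs) = 0" if ij: "i < j" "j < k" for i j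
  proof -
    define H where "H = (\<lambda>ys. G i (take (Suc i) ys) * G j ys)"
    have "ES w k (\<lambda>xs. g i xs * g j xs) = ES w k (\<lambda>xs. H (take (Suc j) xs))"
    proof (rule ES_cong)
      fix xs :: "'a list" assume l: "length xs = k"
      have "take (Suc i) (take (Suc j) xs) = take (Suc i) xs" using ij by (simp add: min_def)
      then show "g i xs * g j xs = H (take (Suc j) xs)"
        unfolding H_def using gG[OF _ l] ij by simp
    qed
    also have "\<dots> = ES w (Suc j) H" by (rule ES_take[OF w1]) (use ij in simp)
    also have "\<dots> = ES w j (\<lambda>ys. \<Sum>z\<in>UNIV. w z * H (ys @ [z]))" by simp
    also have "\<dots> = ES w j (\<lambda>ys. 0)"
    proof (rule ES_cong)
      fix ys :: "'a list" assume l: "length ys = j"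
      have t: "take (Suc i) (ys @ [z]) = take (Suc i) ys" for z using ij l by simp
      have "(\<Sum>z\<in>UNIV. w z * H (ys @ [z])) = G i (take (Suc i) ys) * (\<Sum>z\<in>UNIV. w z * G j (ys @ [z]))"
        unfolding H_def t by (simp add: sum_distrib_left mult.left_commute)
      also have "\<dots> = 0" using mz[OF ij(2) l] by simp
      finally show "(\<Sum>z\<in>UNIV. w z * H (ys @ [z])) = 0" .
    qed
    also have "\<dots> = 0" by (rule ES_zero)
    finally show ?thesis .
  qed
  have "ES w k (\<lambda>xs. (\<Sum>i<k. g i xs)\<^sup>2) = ES w k (\<lambda>xs. \<Sum>i<k. \<Sum>j<k. g i xs * g j xs)"
    by (simp add: power2_eq_square sum_product)
  also have "\<dots> = (\<Sum>i<k. \<Sum>j<k. ES w k (\<lambda>xs. g i xs * g j xs))"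
    by (simp add: ES_sum)
  also have "\<dots> = (\<Sum>i<k. \<Sum>j<k. if j = i then ES w k (\<lambda>xs. (g i xs)\<^sup>2) else 0)"
  proof (intro sum.cong refl)
    fix i j assume i: "i \<in> {..<k}" and j: "j \<in> {..<k}"
    show "ES w k (\<lambda>xs. g i xs * g j xs) = (if j = i then ES w k (\<lambda>xs. (g i xs)\<^sup>2) else 0)"
    proof (cases "i < j")
      case True then show ?thesis using cross[of i j] j by simp
    next
      case False
      show ?thesis
      proof (cases "j = i")
        case True then show ?thesis by (simp add: power2_eq_square)
      next
        case False
        then have "j < i" using \<open>\<not> i < j\<close> by simp
        then have "ES w k (\<lambda>xs. g j xs * g i xs) = 0" using cross[of j i] i by simp
        then show ?thesis using False by (simp add: mult.commute)
      qed
    qed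
  qed
  also have "\<dots> = (\<Sum>i<k. ES w k (\<lambda>xs. (g i xs)\<^sup>2))" by simp
  finally show ?thesis .
qed

lemma ES_jensen:
  assumes w1: "sum w UNIV = 1" and w0: "\<And>z. 0 \<le> w z"
  shows "ES w k f \<le> sqrt (ES w k (\<lambda>xs. (f xs)\<^sup>2))"
proof -
  define m where "m = ES w k f"
  have "0 \<le> ES w k (\<lambda>xs. (f xs - m)\<^sup>2)" by (rule ES_nonneg[OF w0]) simp
  also have "ES w k (\<lambda>xs. (f xs - m)\<^sup>2) = ES w k (\<lambda>xs. (f xs)\<^sup>2 + ((-2 * m) * f xs + m\<^sup>2))"
    by (rule arg_cong[where f="ES w k"]) (simp add: fun_eq_iff power2_eq_square algebra_simps)
  also have "\<dots> = ES w k (\<lambda>xs. (f xs)\<^sup>2) + ((-2 * m) * m + m\<^sup>2)"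
    unfolding ES_add ES_cmult ES_const[OF w1] m_def by simp
  finally have "m\<^sup>2 \<le> ES w k (\<lambda>xs. (f xs)\<^sup>2)" by (simp add: power2_eq_square)
  then have "sqrt (m\<^sup>2) \<le> sqrt (ES w k (\<lambda>xs. (f xs)\<^sup>2))" by (rule real_sqrt_le_mono)
  then show ?thesis unfolding m_def by simp
qed



lemma powr_three_halves: "0 < (c::real) \<Longrightarrow> c powr (3/2) = c * sqrt c"
proof -
  assume c: "0 < c"
  have "c powr (3/2) = c powr (1 + 1/2)" by simp
  also have "\<dots> = c powr 1 * c powr (1/2)" by (rule powr_add)
  also have "\<dots> = c * sqrt c" using c by (simp add: powr_half_sqrt)
  finally show ?thesis .
qed

lemma final_arith:
  fixes \<alpha> dm c \<rho> n :: real
  assumes a: "0 < \<alpha>" and dm: "0 < dm" and c: "0 < c" and \<rho>: "\<rho> = 1 - \<alpha> * dm * c"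
    and \<rho>0: "0 \<le> \<rho>" and \<rho>1: "\<rho> < 1" and n: "1 \<le> n"
  shows "\<alpha> * sqrt (n * (4 * (1 / c))\<^sup>2 / (1 - \<rho>\<^sup>2)) \<le> 4 * sqrt \<alpha> * n / (sqrt dm * c powr (3/2))"
proof -
  have adc: "0 < \<alpha> * dm * c" using a dm c by simp
  have "\<alpha> * dm * c \<le> 1 - \<rho>\<^sup>2"
  proof -
    have "\<rho>\<^sup>2 \<le> \<rho>" using \<rho>0 \<rho>1 by (simp add: power2_eq_square mult_left_le_one_le)
    then show ?thesis using \<rho> by linarith
  qed
  then have X: "n * (4 * (1 / c))\<^sup>2 / (1 - \<rho>\<^sup>2) \<le> n * (4 * (1 / c))\<^sup>2 / (\<alpha> * dm * c)"
    using adc n by (intro divide_left_mono) auto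
  define Y where "Y = n * (4 * (1 / c))\<^sup>2 / (\<alpha> * dm * c)"
  define z where "z = 4 * sqrt n / (sqrt \<alpha> * sqrt dm * c * sqrt c)"
  have z0: "0 \<le> z" unfolding z_def using a dm c n by simp
  have "z\<^sup>2 = Y"
    unfolding z_def Y_def using a dm c n
    by (simp add: power_divide power_mult_distrib field_simps)
  then have sY: "sqrt Y = z" using z0 by (intro real_sqrt_unique) auto
  have "\<alpha> * sqrt (n * (4 * (1 / c))\<^sup>2 / (1 - \<rho>\<^sup>2)) \<le> \<alpha> * sqrt Y"
    unfolding Y_def using X a by (intro mult_left_mono real_sqrt_le_mono) auto
  also have "\<dots> = 4 * sqrt \<alpha> * sqrt n / (sqrt dm * (c * sqrt c))"
  proof -
    have "\<alpha> = sqrt \<alpha> * sqrt \<alpha>" using a by simp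
    then show ?thesis unfolding sY z_def using a dm c
      by (simp add: field_simps)
  qed
  also have "\<dots> \<le> 4 * sqrt \<alpha> * n / (sqrt dm * (c * sqrt c))"
  proof -
    have "sqrt n \<le> n"
    proof -
      have "1 \<le> sqrt n" using n by simp
      then have "sqrt n * 1 \<le> sqrt n * sqrt n" by (intro mult_left_mono) auto
      then show ?thesis using n by simp
    qed
    then show ?thesis using a dm c
      by (intro divide_right_mono mult_left_mono) auto
  qed
  also have "\<dots> = 4 * sqrt \<alpha> * n / (sqrt dm * c powr (3/2))" using c by (simp add: powr_three_halves)
  finally show ?thesis .
qed

lemma geom_bound:
  fixes x :: real assumes "0 \<le> x" "x < 1"
  shows "(\<Sum>j<k. x ^ j) \<le> 1 / (1 - x)"
proof -
  have "(\<Sum>j<k. x ^ j) = (1 - x ^ k) / (1 - x)" using assms by (simp add: sum_gp_strict)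
  also have "\<dots> \<le> 1 / (1 - x)" using assms by (intro divide_right_mono) auto
  finally show ?thesis .
qed



theorem lemma7:
  fixes P :: "'s::finite \<Rightarrow> 'act::{finite,linorder} \<Rightarrow> 's pmf"
    and r :: "'s \<Rightarrow> 'act \<Rightarrow> 's \<Rightarrow> real"
    and d :: "('s \<times> 'act) pmf"
    and \<gamma> \<alpha> :: real
    and QA0 QB0 E0 :: "('s, 'act) qfun"
    and k :: nat
  assumes ergodic: "ergodic P"
    and gamma: "0 < \<gamma>" "\<gamma> < 1"
    and alpha: "0 < \<alpha>" "\<alpha> < 1"
    and rew: "\<And>s a s'. \<bar>r s a s'\<bar> \<le> 1"
    and dpos: "\<And>sa. pmf d sa > 0"
    and QA0: "\<And>sa. \<bar>QA0 sa\<bar> \<le> 1"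
    and QB0: "\<And>sa. \<bar>QB0 sa\<bar> \<le> 1"
  shows "(let dmin = Min (range (pmf d));
              \<rho> = 1 - \<alpha> * dmin * (1 - \<gamma>);
              n = real CARD('s \<times> 'act)
          in integral\<^sup>L (stream_space (measure_pmf (sample_pmf d P)))
               (\<lambda>\<omega>. l2norm (err_UL P r \<gamma> d \<alpha> QA0 QB0 E0 k \<omega>))
             \<le> 4 * sqrt \<alpha> * n / (sqrt dmin * (1 - \<gamma>) powr (3/2))
               + n * l2norm E0 * \<rho> ^ k)"
proof -
  define dmin where "dmin = Min (range (pmf d))"
  define \<rho> where "\<rho> = 1 - \<alpha> * dmin * (1 - \<gamma>)"
  define n where "n = real CARD('s \<times> 'act)"
  define M where "M = sample_pmf d P"
  define w where "w = pmf M"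
  define \<pi> where "\<pi> = greedy (Qstar P r \<gamma>)"
  define T where "T = Tm P d \<alpha> \<gamma> \<pi>"
  define Bd where "Bd = 1 / (1 - \<gamma>)"
  define U where "U = (\<lambda>i (xs::('s \<times> 'act \<times> 's) list). UL P r \<gamma> d \<alpha> QA0 QB0 (take i xs) (xs ! i))"
  define a where "a = (T ^^ k) E0"
  define Wf where "Wf = (\<lambda>xs p. \<Sum>i<k. (T ^^ (k - 1 - i)) (U i xs) p)"
  define FL where "FL = (\<lambda>xs. l2norm (\<lambda>p. a p + \<alpha> * Wf xs p))"

  have dmin_le: "\<And>q. dmin \<le> pmf d q" unfolding dmin_def by (rule Min_le) auto
  have "dmin \<in> range (pmf d)" unfolding dmin_def by (rule Min_in) auto
  then have dmin_pos: "0 < dmin" using dpos by auto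
  have dmin1: "dmin \<le> 1" using dmin_le[of undefined] pmf_le_1[of d undefined] by linarith
  have c0: "0 < 1 - \<gamma>" using gamma by simp
  have adc_le: "\<alpha> * dmin * (1 - \<gamma>) \<le> \<alpha> * 1 * 1"
    using alpha dmin_pos dmin1 gamma by (intro mult_mono) auto
  have adc_le': "\<alpha> * dmin * (1 - \<gamma>) \<le> \<alpha>" using adc_le by simp
  have \<rho>0: "0 \<le> \<rho>" unfolding \<rho>_def using adc_le' alpha by linarith
  have \<rho>1: "\<rho> < 1" unfolding \<rho>_def using alpha dmin_pos c0 by simp
  have w1: "sum w UNIV = 1" unfolding w_def by (rule sum_pmf_UNIV)
  have w0: "\<And>z. 0 \<le> w z" unfolding w_def by simp
  have Bd_eq: "Bd * (1 - \<gamma>) = 1" unfolding Bd_def using c0 by simp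
  have Bd1: "1 \<le> Bd" unfolding Bd_def using gamma by simp
  have h0: "0 < CARD('s \<times> 'act)" by (rule finite_UNIV_card_ge_0) simp
  have h1: "Suc 0 \<le> CARD('s \<times> 'act)" using h0 by (rule Suc_leI)
  have n1: "1 \<le> n" unfolding n_def using of_nat_mono[OF h1, where 'a=real] by simp
  have bnd: "\<bar>fst (sdqL \<alpha> \<gamma> r QA0 QB0 ys) q\<bar> \<le> Bd \<and> \<bar>snd (sdqL \<alpha> \<gamma> r QA0 QB0 ys) q\<bar> \<le> Bd" for ys q
  proof -
    have A: "\<And>q. \<bar>QA0 q\<bar> \<le> Bd" by (rule order_trans[OF QA0 Bd1])
    have B: "\<And>q. \<bar>QB0 q\<bar> \<le> Bd" by (rule order_trans[OF QB0 Bd1])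
    show ?thesis by (rule sdqL_bound[OF A B rew Bd_eq alpha]) (use gamma in simp)
  qed
  have contr: "\<bar>(T ^^ m) v p\<bar> \<le> \<rho> ^ m * l2norm v" for m v p
    unfolding T_def \<rho>_def
    by (rule Tm_pow_contr[OF gamma alpha dmin_le less_imp_le[OF dmin_pos]]) (rule abs_le_l2norm)

  have errF: "l2norm (err_UL P r \<gamma> d \<alpha> QA0 QB0 E0 k \<omega>) = FL (stake k \<omega>)" for \<omega>
  proof -
    have "err_UL P r \<gamma> d \<alpha> QA0 QB0 E0 k \<omega> = (\<lambda>p. a p + \<alpha> * Wf (stake k \<omega>) p)"
      unfolding err_closed a_def Wf_def T_def \<pi>_def
    proof (rule ext)
      fix p
      have "(\<Sum>i<k. (Tm P d \<alpha> \<gamma> (greedy (Qstar P r \<gamma>)) ^^ (k - 1 - i)) (UL P r \<gamma> d \<alpha> QA0 QB0 (stake i \<omega>) (\<omega> !! i)) p)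
          = (\<Sum>i<k. (Tm P d \<alpha> \<gamma> (greedy (Qstar P r \<gamma>)) ^^ (k - 1 - i)) (U i (stake k \<omega>)) p)"
        by (rule sum.cong[OF refl]) (simp add: U_def take_stake min_def)
      then show "(Tm P d \<alpha> \<gamma> (greedy (Qstar P r \<gamma>)) ^^ k) E0 p +
          \<alpha> * (\<Sum>i<k. (Tm P d \<alpha> \<gamma> (greedy (Qstar P r \<gamma>)) ^^ (k - 1 - i)) (UL P r \<gamma> d \<alpha> QA0 QB0 (stake i \<omega>) (\<omega> !! i)) p)
          = (Tm P d \<alpha> \<gamma> (greedy (Qstar P r \<gamma>)) ^^ k) E0 p +
          \<alpha> * (\<Sum>i<k. (Tm P d \<alpha> \<gamma> (greedy (Qstar P r \<gamma>)) ^^ (k - 1 - i)) (U i (stake k \<omega>)) p)" by simp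
    qed
    then show ?thesis unfolding FL_def by simp
  qed
  have step1: "integral\<^sup>L (stream_space (measure_pmf (sample_pmf d P))) (\<lambda>\<omega>. l2norm (err_UL P r \<gamma> d \<alpha> QA0 QB0 E0 k \<omega>))
      = ES w k FL"
    unfolding errF w_def M_def by (rule integral_stake) (simp add: FL_def l2norm_nonneg)

  have step2: "ES w k FL \<le> l2norm a + \<alpha> * ES w k (\<lambda>xs. l2norm (Wf xs))"
  proof -
    have "ES w k FL \<le> ES w k (\<lambda>xs. l2norm a + \<alpha> * l2norm (Wf xs))"
      by (rule ES_mono[OF w0]) (use l2norm_tri[of a \<alpha>] alpha in \<open>simp add: FL_def\<close>)
    also have "\<dots> = l2norm a + \<alpha> * ES w k (\<lambda>xs. l2norm (Wf xs))"
      by (simp add: ES_add ES_cmult ES_const[OF w1])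
    finally show ?thesis .
  qed

  have step3: "ES w k (\<lambda>xs. l2norm (Wf xs)) \<le> sqrt (ES w k (\<lambda>xs. (l2norm (Wf xs))\<^sup>2))"
    by (rule ES_jensen[OF w1 w0])

  have mz: "(\<Sum>z\<in>UNIV. w z * (T ^^ (k - 1 - i)) (U i (ys @ [z])) p) = 0" if l: "length ys = i" for i ys p
  proof -
    have Uz: "U i (ys @ [z]) = UL P r \<gamma> d \<alpha> QA0 QB0 ys z" for z unfolding U_def l[symmetric] by simp
    have zero: "(\<lambda>q. \<Sum>z\<in>UNIV. w z * UL P r \<gamma> d \<alpha> QA0 QB0 ys z q) = (\<lambda>q. 0)"
    proof (rule ext)
      fix q
      show "(\<Sum>z\<in>UNIV. w z * UL P r \<gamma> d \<alpha> QA0 QB0 ys z q) = 0"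
        unfolding UL_def w_def M_def
        by (simp add: right_diff_distrib sum_subtractf noise_mean)
    qed
    have "(\<Sum>z\<in>UNIV. w z * (T ^^ (k - 1 - i)) (U i (ys @ [z])) p)
        = (T ^^ (k - 1 - i)) (\<lambda>q. \<Sum>z\<in>UNIV. w z * UL P r \<gamma> d \<alpha> QA0 QB0 ys z q) p"
      unfolding Uz T_def by (rule Tm_pow_lin[symmetric])
    also have "\<dots> = 0" unfolding zero T_def by (simp add: Tm_pow_kernel)
    finally show ?thesis .
  qed
  have Utake: "U i (take (Suc i) xs) = U i xs" if "i < length xs" for i xs
    unfolding U_def using that by (simp add: min_def)
  have step4: "ES w k (\<lambda>xs. (l2norm (Wf xs))\<^sup>2) = (\<Sum>p\<in>UNIV. \<Sum>i<k. ES w k (\<lambda>xs. ((T ^^ (k - 1 - i)) (U i xs) p)\<^sup>2))"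
  proof -
    have "ES w k (\<lambda>xs. (l2norm (Wf xs))\<^sup>2) = ES w k (\<lambda>xs. \<Sum>p\<in>UNIV. (Wf xs p)\<^sup>2)"
      by (simp add: l2norm_sq)
    also have "\<dots> = (\<Sum>p\<in>UNIV. ES w k (\<lambda>xs. (Wf xs p)\<^sup>2))" by (rule ES_sum) simp
    also have "\<dots> = (\<Sum>p\<in>UNIV. \<Sum>i<k. ES w k (\<lambda>xs. ((T ^^ (k - 1 - i)) (U i xs) p)\<^sup>2))"
    proof (rule sum.cong[OF refl])
      fix p
      show "ES w k (\<lambda>xs. (Wf xs p)\<^sup>2) = (\<Sum>i<k. ES w k (\<lambda>xs. ((T ^^ (k - 1 - i)) (U i xs) p)\<^sup>2))"
        unfolding Wf_def
        apply (rule ES_orth[OF w1 w0, where G="\<lambda>i xs. (T ^^ (k - 1 - i)) (U i xs) p"])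
         apply (simp add: Utake)
        by (rule mz)
    qed
    finally show ?thesis .
  qed

  have step5: "ES w k (\<lambda>xs. ((T ^^ (k - 1 - i)) (U i xs) p)\<^sup>2) \<le> (\<rho> ^ (k - 1 - i))\<^sup>2 * (4 * Bd)\<^sup>2"
    if i: "i < k" for i p
  proof -
    define m where "m = k - 1 - i"
    have pw: "((T ^^ m) (U i xs) p)\<^sup>2 \<le> (\<rho> ^ m)\<^sup>2 * (\<Sum>q\<in>UNIV. (U i xs q)\<^sup>2)" for xs
    proof -
      have "\<bar>(T ^^ m) (U i xs) p\<bar>\<^sup>2 \<le> (\<rho> ^ m * l2norm (U i xs))\<^sup>2"
        by (rule power_mono[OF contr]) simp
      then show ?thesis by (simp add: power_mult_distrib l2norm_sq)
    qed
    have "ES w k (\<lambda>xs. ((T ^^ m) (U i xs) p)\<^sup>2) \<le> ES w k (\<lambda>xs. (\<rho> ^ m)\<^sup>2 * (\<Sum>q\<in>UNIV. (U i xs q)\<^sup>2))"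
      by (rule ES_mono[OF w0 pw])
    also have "\<dots> = (\<rho> ^ m)\<^sup>2 * ES w k (\<lambda>xs. \<Sum>q\<in>UNIV. (U i xs q)\<^sup>2)" by (rule ES_cmult)
    also have "ES w k (\<lambda>xs. \<Sum>q\<in>UNIV. (U i xs q)\<^sup>2) = ES w k (\<lambda>xs. (\<lambda>ys. \<Sum>q\<in>UNIV. (U i ys q)\<^sup>2) (take (Suc i) xs))"
      by (rule ES_cong) (use i in \<open>simp add: Utake\<close>)
    also have "\<dots> = ES w (Suc i) (\<lambda>ys. \<Sum>q\<in>UNIV. (U i ys q)\<^sup>2)"
      by (rule ES_take[OF w1]) (use i in simp)
    also have "\<dots> = ES w i (\<lambda>ys. \<Sum>z\<in>UNIV. w z * (\<Sum>q\<in>UNIV. (UL P r \<gamma> d \<alpha> QA0 QB0 ys z q)\<^sup>2))"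
      unfolding ES.simps by (rule ES_cong) (simp add: U_def nth_append)
    also have "\<dots> \<le> ES w i (\<lambda>ys. (4 * Bd)\<^sup>2)"
    proof (rule ES_mono[OF w0])
      fix ys :: "('s \<times> 'act \<times> 's) list"
      show "(\<Sum>z\<in>UNIV. w z * (\<Sum>q\<in>UNIV. (UL P r \<gamma> d \<alpha> QA0 QB0 ys z q)\<^sup>2)) \<le> (4 * Bd)\<^sup>2"
        unfolding UL_def w_def M_def
        by (rule noise_var) (use bnd gamma in auto)
    qed
    also have "\<dots> = (4 * Bd)\<^sup>2" by (rule ES_const[OF w1])
    finally show ?thesis unfolding m_def using \<rho>0
      by (simp add: mult_left_mono)
  qed

  have step6: "ES w k (\<lambda>xs. (l2norm (Wf xs))\<^sup>2) \<le> n * (4 * Bd)\<^sup>2 / (1 - \<rho>\<^sup>2)"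
  proof -
    have "ES w k (\<lambda>xs. (l2norm (Wf xs))\<^sup>2) \<le> (\<Sum>p\<in>(UNIV::('s \<times> 'act) set). \<Sum>i<k. (\<rho> ^ (k - 1 - i))\<^sup>2 * (4 * Bd)\<^sup>2)"
      unfolding step4 by (intro sum_mono step5) auto
    also have "\<dots> = n * ((\<Sum>j<k. (\<rho>\<^sup>2) ^ j) * (4 * Bd)\<^sup>2)"
    proof -
      have "(\<Sum>i<k. (\<rho> ^ (k - 1 - i))\<^sup>2) = (\<Sum>i<k. (\<rho>\<^sup>2) ^ (k - Suc i))"
        by (rule sum.cong) (simp_all add: power_mult[symmetric] mult.commute)
      also have "\<dots> = (\<Sum>j<k. (\<rho>\<^sup>2) ^ j)" by (rule sum.nat_diff_reindex)
      finally have "(\<Sum>i<k. (\<rho> ^ (k - 1 - i))\<^sup>2) = (\<Sum>j<k. (\<rho>\<^sup>2) ^ j)" .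
      then show ?thesis by (simp add: n_def sum_distrib_right[symmetric])
    qed
    also have "\<dots> \<le> n * ((1 / (1 - \<rho>\<^sup>2)) * (4 * Bd)\<^sup>2)"
    proof -
      have "\<rho>\<^sup>2 < 1" using \<rho>0 \<rho>1 by (simp add: power_less_one_iff abs_square_less_1)
      then have "(\<Sum>j<k. (\<rho>\<^sup>2) ^ j) \<le> 1 / (1 - \<rho>\<^sup>2)" by (intro geom_bound) auto
      then show ?thesis using n1 by (intro mult_left_mono mult_right_mono) auto
    qed
    also have "\<dots> = n * (4 * Bd)\<^sup>2 / (1 - \<rho>\<^sup>2)" by simp
    finally show ?thesis .
  qed

  have step7: "l2norm a \<le> n * l2norm E0 * \<rho> ^ k"
  proof -
    have "\<bar>a p\<bar> \<le> \<rho> ^ k * l2norm E0" for p unfolding a_def by (rule contr)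
    then have "(a p)\<^sup>2 \<le> (\<rho> ^ k * l2norm E0)\<^sup>2" for p
      using power_mono[of "\<bar>a p\<bar>" "\<rho> ^ k * l2norm E0" 2] by simp
    then have "(\<Sum>p\<in>UNIV. (a p)\<^sup>2) \<le> (\<Sum>p\<in>(UNIV::('s \<times> 'act) set). (\<rho> ^ k * l2norm E0)\<^sup>2)"
      by (intro sum_mono)
    also have "\<dots> = n * (\<rho> ^ k * l2norm E0)\<^sup>2" by (simp add: n_def)
    finally have "l2norm a \<le> sqrt (n * (\<rho> ^ k * l2norm E0)\<^sup>2)"
      unfolding l2norm_def by (rule real_sqrt_le_mono)
    also have "\<dots> = sqrt n * (\<rho> ^ k * l2norm E0)"
      using \<rho>0 by (simp add: real_sqrt_mult l2norm_nonneg)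
    also have "\<dots> \<le> n * (\<rho> ^ k * l2norm E0)"
    proof -
      have "1 \<le> sqrt n" using n1 by simp
      then have "sqrt n * 1 \<le> sqrt n * sqrt n" by (intro mult_left_mono) auto
      then have "sqrt n \<le> n" using n1 by simp
      then show ?thesis using \<rho>0 by (intro mult_right_mono) (simp_all add: l2norm_nonneg)
    qed
    finally show ?thesis by (simp add: mult.assoc mult.commute mult.left_commute)
  qed

  have fin: "\<alpha> * sqrt (n * (4 * Bd)\<^sup>2 / (1 - \<rho>\<^sup>2)) \<le> 4 * sqrt \<alpha> * n / (sqrt dmin * (1 - \<gamma>) powr (3/2))"
    unfolding Bd_def by (rule final_arith[OF alpha(1) dmin_pos c0 \<rho>_def \<rho>0 \<rho>1 n1])

  have "integral\<^sup>L (stream_space (measure_pmf (sample_pmf d P))) (\<lambda>\<omega>. l2norm (err_UL P r \<gamma> d \<alpha> QA0 QB0 E0 k \<omega>))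
      \<le> l2norm a + \<alpha> * sqrt (n * (4 * Bd)\<^sup>2 / (1 - \<rho>\<^sup>2))"
  proof -
    have "ES w k (\<lambda>xs. l2norm (Wf xs)) \<le> sqrt (n * (4 * Bd)\<^sup>2 / (1 - \<rho>\<^sup>2))"
      using step3 real_sqrt_le_mono[OF step6] by linarith
    then have "\<alpha> * ES w k (\<lambda>xs. l2norm (Wf xs)) \<le> \<alpha> * sqrt (n * (4 * Bd)\<^sup>2 / (1 - \<rho>\<^sup>2))"
      using alpha by (intro mult_left_mono) auto
    then show ?thesis unfolding step1 using step2 by linarith
  qed
  then show ?thesis
    unfolding Let_def dmin_def[symmetric] \<rho>_def[symmetric] n_def[symmetric]
    using step7 fin by linarith
qed

end
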